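(* Let $c\in C_{\mathrm{SAGE}}(A)$ and suppose the index set $N=\{i\in[m]: c_i<0\}$ is nonempty. Then there exist vectors $c^{(i)}\in C_{\mathrm{AGE}}(A,i)$, $i\in N$, such that $c=\sum_{i\in N}c^{(i)}$ and $c^{(i)}_j=0$ for all distinct $i,j\in N$.
   Context: Let $A\in\mathbb{R}^{n\times m}$ have distinct columns $a_1,\dots,a_m$. For $c\in\mathbb{R}^m$, $\mathrm{Sig}(A,c)$ denotes the function $x\mapsto\sum_{i=1}^m c_i\exp(a_i^\top x)$ on $\mathbb{R}^n$. $C_{\mathrm{NNS}}(A)=\{c\in\mathbb{R}^m:\mathrm{Sig}(A,c)(x)\ge 0\ \forall x\in\mathbb{R}^n\}$. For $k\in[m]$, the $k$-th AGE cone is $C_{\mathrm{AGE}}(A,k)=\{c\in C_{\mathrm{NNS}}(A): c_i\ge 0\ \forall i\ne k\}$, and the SAGE cone is the Minkowski sum $C_{\mathrm{SAGE}}(A)=\sum_{k=1}^m C_{\mathrm{AGE}}(A,k)$. *)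

theory Defs
  imports "HOL-Analysis.Analysis"
begin

text \<open>A is an n x m real matrix (rows indexed by 'n, columns by 'm);
  the i-th column is a_i = column i A.\<close>

definition Sig :: "real^'m^'n \<Rightarrow> real^'m \<Rightarrow> real^'n \<Rightarrow> real" where
  "Sig A c x = (\<Sum>i\<in>UNIV. c $ i * exp (column i A \<bullet> x))"

definition C_NNS :: "real^'m^'n \<Rightarrow> (real^'m) set" where
  "C_NNS A = {c. \<forall>x. Sig A c x \<ge> 0}"

definition C_AGE :: "real^'m^'n \<Rightarrow> 'm \<Rightarrow> (real^'m) set" where
  "C_AGE A k = {c \<in> C_NNS A. \<forall>i. i \<noteq> k \<longrightarrow> c $ i \<ge> 0}"

definition C_SAGE :: "real^'m^'n \<Rightarrow> (real^'m) set" where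
  "C_SAGE A = {c. \<exists>f. (\<forall>k. f k \<in> C_AGE A k) \<and> c = (\<Sum>k\<in>UNIV. f k)}"

definition distinct_columns :: "real^'m^'n \<Rightarrow> bool" where
  "distinct_columns A \<longleftrightarrow> (\<forall>i j. i \<noteq> j \<longrightarrow> column i A \<noteq> column j A)"

end

theory Submission
  imports Defs
begin

lemma Sig_add: "Sig A (u + v) x = Sig A u x + Sig A v x"
  unfolding Sig_def by (simp add: distrib_right sum.distrib)

lemma Sig_scale: "Sig A (r *\<^sub>R u) x = r * Sig A u x"
  unfolding Sig_def by (simp add: sum_distrib_left mult.assoc)

lemma transfer:
  fixes g :: "'m \<Rightarrow> real^'m" and A :: "real^'m^'n"
  assumes g: "\<forall>i. g i \<in> C_AGE A i" and t: "\<forall>i. t i \<ge> 0" and ts: "sum t UNIV = 1"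
    and cond: "\<forall>i. i \<noteq> k \<longrightarrow> g i $ k + t i * g k $ k \<ge> 0"
  shows "\<forall>i. (if i = k then t k *\<^sub>R g k else g i + t i *\<^sub>R g k) \<in> C_AGE A i"
    and "sum (\<lambda>i. if i = k then t k *\<^sub>R g k else g i + t i *\<^sub>R g k) UNIV = sum g UNIV"
proof -
  show "\<forall>i. (if i = k then t k *\<^sub>R g k else g i + t i *\<^sub>R g k) \<in> C_AGE A i"
  proof
    fix i
    have gi: "\<forall>x. Sig A (g i) x \<ge> 0" "\<forall>j. j \<noteq> i \<longrightarrow> g i $ j \<ge> 0"
      using g unfolding C_AGE_def C_NNS_def by auto
    have gk: "\<forall>x. Sig A (g k) x \<ge> 0" "\<forall>j. j \<noteq> k \<longrightarrow> g k $ j \<ge> 0"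
      using g unfolding C_AGE_def C_NNS_def by auto
    show "(if i = k then t k *\<^sub>R g k else g i + t i *\<^sub>R g k) \<in> C_AGE A i"
    proof (cases "i = k")
      case True
      then show ?thesis using gk t unfolding C_AGE_def C_NNS_def
        by (auto simp: Sig_scale)
    next
      case False
      have "\<forall>x. Sig A (g i + t i *\<^sub>R g k) x \<ge> 0"
        using gi gk t by (simp add: Sig_add Sig_scale)
      moreover have "\<forall>j. j \<noteq> i \<longrightarrow> (g i + t i *\<^sub>R g k) $ j \<ge> 0"
      proof (intro allI impI)
        fix j assume "j \<noteq> i"
        show "(g i + t i *\<^sub>R g k) $ j \<ge> 0"
        proof (cases "j = k")
          case True then show ?thesis using cond False by auto
        next
          case False then show ?thesis using gi gk t \<open>j \<noteq> i\<close> by auto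
        qed
      qed
      ultimately show ?thesis using False unfolding C_AGE_def C_NNS_def by auto
    qed
  qed
  have r: "UNIV = insert k (UNIV - {k})" by auto
  have "sum (\<lambda>i. if i = k then t k *\<^sub>R g k else g i + t i *\<^sub>R g k) UNIV
      = t k *\<^sub>R g k + sum (\<lambda>i. g i + t i *\<^sub>R g k) (UNIV - {k})"
    by (subst r, subst sum.insert) auto
  also have "\<dots> = t k *\<^sub>R g k + sum g (UNIV - {k}) + (sum t (UNIV - {k})) *\<^sub>R g k"
    by (simp add: sum.distrib scaleR_sum_left)
  also have "sum t (UNIV - {k}) = 1 - t k"
    using ts by (subst (asm) r, subst (asm) sum.insert) auto
  also have "t k *\<^sub>R g k + sum g (UNIV - {k}) + (1 - t k) *\<^sub>R g k = g k + sum g (UNIV - {k})"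
    by (simp add: algebra_simps)
  also have "\<dots> = sum g UNIV"
    by (subst (2) r, subst sum.insert) auto
  finally show "sum (\<lambda>i. if i = k then t k *\<^sub>R g k else g i + t i *\<^sub>R g k) UNIV = sum g UNIV" .
qed

lemma main_induct:
  fixes A :: "real^'m^'n" and c :: "real^'m"
  assumes c0: "c = sum g0 UNIV" and g0: "\<forall>i. g0 i \<in> C_AGE A i"
    and Ndef: "N = {i. c $ i < 0}" and Nne: "N \<noteq> {}"
  shows "finite K \<Longrightarrow> \<exists>g. (\<forall>i. g i \<in> C_AGE A i) \<and> c = sum g UNIV
      \<and> (\<forall>k\<in>K. k \<notin> N \<longrightarrow> g k = 0) \<and> (\<forall>j\<in>K. j \<in> N \<longrightarrow> (\<forall>i. i \<noteq> j \<longrightarrow> g i $ j = 0))"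
proof (induction K rule: finite_induct)
  case empty
  then show ?case using c0 g0 by auto
next
  case (insert k F)
  then obtain g where g: "\<forall>i. g i \<in> C_AGE A i" and cs: "c = sum g UNIV"
    and el: "\<forall>k\<in>F. k \<notin> N \<longrightarrow> g k = 0"
    and zr: "\<forall>j\<in>F. j \<in> N \<longrightarrow> (\<forall>i. i \<noteq> j \<longrightarrow> g i $ j = 0)"
    by (elim exE conjE) (rule that, assumption+)
  have offd: "\<And>i j. j \<noteq> i \<Longrightarrow> g i $ j \<ge> 0" using g unfolding C_AGE_def by auto
  have gkF: "\<And>j. j \<in> F \<Longrightarrow> j \<in> N \<Longrightarrow> g k $ j = 0" using zr insert.hyps(2) by force
  define S where "S = sum (\<lambda>i. g i $ k) (UNIV - {k})"
  have r: "UNIV = insert k (UNIV - {k})" by auto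
  have ck: "c $ k = g k $ k + S"
    unfolding cs S_def sum_component by (subst r, subst sum.insert) auto
  have S0: "S \<ge> 0" unfolding S_def by (rule sum_nonneg) (use offd in auto)
  have zpres: "\<And>t. \<forall>j\<in>F. j \<in> N \<longrightarrow> (\<forall>i. i \<noteq> j \<longrightarrow>
      (if i = k then t k *\<^sub>R g k else g i + t i *\<^sub>R g k) $ j = 0)"
    using zr gkF by auto
  show ?case
  proof (cases "k \<in> N")
    case True
    define a where "a = - g k $ k"
    have ckn: "c $ k < 0" using True Ndef by auto
    have a0: "a > 0" and Sa: "S < a" using ckn ck S0 unfolding a_def by auto
    define t where "t = (\<lambda>i. if i = k then 1 - S / a else g i $ k / a)"
    have tnn: "\<forall>i. t i \<ge> 0" unfolding t_def using a0 Sa offd by auto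
    have "sum t (UNIV - {k}) = S / a"
      unfolding t_def S_def by (simp add: sum_divide_distrib)
    then have ts: "sum t UNIV = 1" by (subst r, subst sum.insert) (auto simp: t_def)
    have z: "\<forall>i. i \<noteq> k \<longrightarrow> g i $ k + t i * g k $ k = 0"
      unfolding t_def a_def using a0 a_def by auto
    note T = transfer[OF g tnn ts, of k]
    have T1: "\<forall>i. (if i = k then t k *\<^sub>R g k else g i + t i *\<^sub>R g k) \<in> C_AGE A i"
      and T2: "sum (\<lambda>i. if i = k then t k *\<^sub>R g k else g i + t i *\<^sub>R g k) UNIV = sum g UNIV"
      using T z by auto
    show ?thesis
    proof (intro exI conjI)
      show "\<forall>i. (if i = k then t k *\<^sub>R g k else g i + t i *\<^sub>R g k) \<in> C_AGE A i" by (rule T1)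
      show "c = sum (\<lambda>i. if i = k then t k *\<^sub>R g k else g i + t i *\<^sub>R g k) UNIV" using T2 cs by simp
      show "\<forall>k'\<in>insert k F. k' \<notin> N \<longrightarrow> (if k' = k then t k *\<^sub>R g k else g k' + t k' *\<^sub>R g k) = 0"
        using el True by (auto simp: t_def)
      show "\<forall>j\<in>insert k F. j \<in> N \<longrightarrow> (\<forall>i. i \<noteq> j \<longrightarrow> (if i = k then t k *\<^sub>R g k else g i + t i *\<^sub>R g k) $ j = 0)"
        using zpres[of t] z by auto
    qed
  next
    case False
    obtain i0 where i0: "i0 \<in> N" using Nne by auto
    have i0k: "i0 \<noteq> k" using i0 False by auto
    have ckn: "c $ k \<ge> 0" using False Ndef by auto
    obtain t where tnn: "\<forall>i. t i \<ge> 0" and ts: "sum t UNIV = 1" and tk: "t k = 0"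
      and cond: "\<forall>i. i \<noteq> k \<longrightarrow> g i $ k + t i * g k $ k \<ge> 0"
      and tel: "\<forall>k'. g k' = 0 \<longrightarrow> t k' = 0 \<or> k' = i0"
    proof (cases "g k $ k \<ge> 0")
      case True
      define t where "t = (\<lambda>i. if i = i0 then 1 else 0::real)"
      have "sum t UNIV = 1" unfolding t_def by simp
      then show ?thesis
        using that[of t] True offd i0k unfolding t_def by (auto intro: add_nonneg_nonneg)
    next
      case neg: False
      have Sp: "S > 0" "S \<ge> - g k $ k" using ck ckn neg by auto
      define t where "t = (\<lambda>i. if i = k then 0 else g i $ k / S)"
      have tnn: "\<forall>i. t i \<ge> 0" unfolding t_def using Sp offd by auto
      have "sum t (UNIV - {k}) = 1"
        unfolding t_def S_def using Sp by (simp add: sum_divide_distrib[symmetric] S_def)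
      then have ts: "sum t UNIV = 1" by (subst r, subst sum.insert) (auto simp: t_def)
      have cond: "\<forall>i. i \<noteq> k \<longrightarrow> g i $ k + t i * g k $ k \<ge> 0"
      proof (intro allI impI)
        fix i assume "i \<noteq> k"
        have "g i $ k + t i * g k $ k = g i $ k * (1 + g k $ k / S)"
          unfolding t_def using \<open>i \<noteq> k\<close> by (simp add: algebra_simps)
        moreover have "1 + g k $ k / S \<ge> 0" using Sp by (simp add: field_simps)
        ultimately show "g i $ k + t i * g k $ k \<ge> 0" using offd[of k i] \<open>i \<noteq> k\<close> by simp
      qed
      show ?thesis using that[of t, OF tnn ts _ cond] unfolding t_def by auto
    qed
    note T = transfer[OF g tnn ts cond]
    show ?thesis
    proof (intro exI conjI)
      show "\<forall>i. (if i = k then t k *\<^sub>R g k else g i + t i *\<^sub>R g k) \<in> C_AGE A i" by (rule T(1))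
      show "c = sum (\<lambda>i. if i = k then t k *\<^sub>R g k else g i + t i *\<^sub>R g k) UNIV" using T(2) cs by simp
      show "\<forall>k'\<in>insert k F. k' \<notin> N \<longrightarrow> (if k' = k then t k *\<^sub>R g k else g k' + t k' *\<^sub>R g k) = 0"
        using el tk tel i0 by fastforce
      show "\<forall>j\<in>insert k F. j \<in> N \<longrightarrow> (\<forall>i. i \<noteq> j \<longrightarrow> (if i = k then t k *\<^sub>R g k else g i + t i *\<^sub>R g k) $ j = 0)"
        using zpres[of t] False by auto
    qed
  qed
qed

theorem mainTheorem2:
  fixes A :: "real^'m^'n" and c :: "real^'m"
  assumes "distinct_columns A"
    and "c \<in> C_SAGE A"
    and "{i. c $ i < 0} \<noteq> {}"
  shows "\<exists>cc :: 'm \<Rightarrow> real^'m.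
           (\<forall>i\<in>{i. c $ i < 0}. cc i \<in> C_AGE A i)
         \<and> c = (\<Sum>i\<in>{i. c $ i < 0}. cc i)
         \<and> (\<forall>i\<in>{i. c $ i < 0}. \<forall>j\<in>{i. c $ i < 0}. i \<noteq> j \<longrightarrow> cc i $ j = 0)"
proof -
  obtain g0 where g0: "\<forall>k. g0 k \<in> C_AGE A k" and c0: "c = sum g0 UNIV"
    using assms(2) unfolding C_SAGE_def by auto
  obtain g where g: "\<forall>i. g i \<in> C_AGE A i" and cs: "c = sum g UNIV"
    and el: "\<forall>k\<in>UNIV. k \<notin> {i. c $ i < 0} \<longrightarrow> g k = 0"
    and zr: "\<forall>j\<in>UNIV. j \<in> {i. c $ i < 0} \<longrightarrow> (\<forall>i. i \<noteq> j \<longrightarrow> g i $ j = 0)"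
    using main_induct[OF c0 g0 refl assms(3) finite[of UNIV]] by (elim exE conjE) (rule that, assumption+)
  have "sum g UNIV = sum g {i. c $ i < 0}"
    by (rule sum.mono_neutral_right) (use el in simp_all)
  with cs have "c = (\<Sum>i\<in>{i. c $ i < 0}. g i)" by (rule trans)
  moreover have "\<forall>i\<in>{i. c $ i < 0}. \<forall>j\<in>{i. c $ i < 0}. i \<noteq> j \<longrightarrow> g i $ j = 0"
    using zr by blast
  ultimately show ?thesis using g by blast
qed

end
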